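(* Let $\mathcal{T}$ be a finite or countably infinite set, let $\prec$ be a strict total order on $\mathcal{T}$, let $\mathbf{p},\mathbf{q}$ be probability distributions on $\mathcal{T}$, and let $m$ be a positive integer. Let $X_0 \sim \mathbf{q}$, $X_1,\dots,X_m \sim^{\mathrm{iid}} \mathbf{p}$, $U_0,\dots,U_m \sim^{\mathrm{iid}} \mathrm{Uniform}(0,1)$ be mutually independent, and let $R = \sum_{j=1}^m \big(\mathbb{I}[X_j \prec X_0] + \mathbb{I}[X_j = X_0, U_j < U_0]\big)$. For $x \in \mathcal{T}$ let $\tilde{\mathbf{p}}(x) = \sum_{x' \prec x} \mathbf{p}(x')$. Then for $0 \le r \le m$, $$\Pr[R = r] = \sum_{x\in\mathcal{T}} H(x,m,r)\,\mathbf{q}(x),$$ where $H(x,m,r)$ is defined as follows. If $0 < \mathbf{p}(x) < 1$, writing $\rho(x) = \tilde{\mathbf{p}}(x)/(1-\mathbf{p}(x))$, $$H(x,m,r) = \sum_{e=0}^m \left\{ \left[ \sum_{j=0}^{e} \binom{m-e}{r-j} \rho(x)^{r-j} \big(1-\rho(x)\big)^{(m-e)-(r-j)} \frac{1}{e+1} \right] \binom{m}{e} \mathbf{p}(x)^e (1-\mathbf{p}(x))^{m-e} \right\};$$ if $\mathbf{p}(x) = 0$, $H(x,m,r) = \binom{m}{r}\tilde{\mathbf{p}}(x)^r (1-\tilde{\mathbf{p}}(x))^{m-r}$; and if $\mathbf{p}(x) = 1$, $H(x,m,r) = \frac{1}{m+1}$.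
   Context: $\mathbb{I}[\cdot]$ denotes the indicator of an event. Conventions: $\binom{n}{k} = 0$ when $k<0$ or $k>n$, and $0^0 = 1$. *)

theory Defs
  imports "HOL-Probability.Probability"
begin

definition ptilde :: "('a \<times> 'a) set \<Rightarrow> 'a pmf \<Rightarrow> 'a \<Rightarrow> real" where
  "ptilde lt p x = (\<Sum>\<^sub>\<infinity>y\<in>{y. (y, x) \<in> lt}. pmf p y)"

definition rho :: "('a \<times> 'a) set \<Rightarrow> 'a pmf \<Rightarrow> 'a \<Rightarrow> real" where
  "rho lt p x = ptilde lt p x / (1 - pmf p x)"

text \<open>The function H(x,m,r). Binomial terms with r - j < 0 vanish (convention), hence the guard j \<le> r;
  when r - j > m - e the binomial coefficient is already 0.\<close>
definition H :: "('a \<times> 'a) set \<Rightarrow> 'a pmf \<Rightarrow> 'a \<Rightarrow> nat \<Rightarrow> nat \<Rightarrow> real" where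
  "H lt p x m r =
    (if 0 < pmf p x \<and> pmf p x < 1 then
       (\<Sum>e=0..m.
          (\<Sum>j=0..e. (if j \<le> r then
               real ((m - e) choose (r - j)) * rho lt p x ^ (r - j)
                 * (1 - rho lt p x) ^ ((m - e) - (r - j)) * (1 / real (e + 1))
             else 0))
          * real (m choose e) * pmf p x ^ e * (1 - pmf p x) ^ (m - e))
     else if pmf p x = 0 then
       real (m choose r) * ptilde lt p x ^ r * (1 - ptilde lt p x) ^ (m - r)
     else 1 / real (m + 1))"

definition rankR :: "('a \<times> 'a) set \<Rightarrow> nat \<Rightarrow> (nat \<Rightarrow> 'a) \<Rightarrow> (nat \<Rightarrow> real) \<Rightarrow> nat" where
  "rankR lt m xs us = (\<Sum>j=1..m. (if (xs j, xs 0) \<in> lt then 1 else 0)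
                               + (if xs j = xs 0 \<and> us j < us 0 then 1 else 0))"

definition joint :: "'a pmf \<Rightarrow> 'a pmf \<Rightarrow> nat \<Rightarrow> ((nat \<Rightarrow> 'a) \<times> (nat \<Rightarrow> real)) measure" where
  "joint p q m =
     (\<Pi>\<^sub>M j\<in>{0..m}. (if j = 0 then measure_pmf q else measure_pmf p))
       \<Otimes>\<^sub>M (\<Pi>\<^sub>M j\<in>{0..m}. uniform_measure lborel {0<..<1::real})"

end

theory Submission
  imports Defs
begin



lemma compX:
  assumes "j \<in> {0..m}"
  shows "(\<lambda>\<omega>. fst \<omega> j) \<in> measurable (joint p q m) (count_space UNIV)"
proof -
  have "(\<lambda>\<omega>. fst \<omega> j) \<in> measurable (joint p q m) (if j = 0 then measure_pmf q else measure_pmf p)"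
    unfolding joint_def
    by (rule measurable_compose[OF measurable_fst measurable_component_singleton]) (use assms in auto)
  then show ?thesis by (cases "j = 0") auto
qed

lemma compU:
  assumes "j \<in> {0..m}"
  shows "(\<lambda>\<omega>. snd \<omega> j) \<in> borel_measurable (joint p q m)"
proof -
  have "(\<lambda>\<omega>. snd \<omega> j) \<in> measurable (joint p q m) (uniform_measure lborel {0<..<1::real})"
    unfolding joint_def
    by (rule measurable_compose[OF measurable_snd measurable_component_singleton]) (use assms in auto)
  then show ?thesis by (simp cong: measurable_cong_sets)
qed

lemma pairX:
  fixes lt :: "('a::countable \<times> 'a) set" and p q :: "'a pmf"
  assumes "j \<in> {0..m}" "i \<in> {0..m}"
  shows "Measurable.pred (joint p q m) (\<lambda>\<omega>. (fst \<omega> j, fst \<omega> i) \<in> lt)"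
proof -
  have "(\<lambda>\<omega>. (fst \<omega> j, fst \<omega> i)) \<in> measurable (joint p q m) (count_space UNIV \<Otimes>\<^sub>M count_space UNIV)"
    using compX[OF assms(1)] compX[OF assms(2)] by (rule measurable_Pair)
  then have "(\<lambda>\<omega>. (fst \<omega> j, fst \<omega> i)) \<in> measurable (joint p q m) (count_space UNIV)"
    by (simp add: pair_measure_countable)
  then show ?thesis by (rule measurable_compose) simp
qed

lemma eqX:
  fixes p q :: "'a::countable pmf"
  assumes "j \<in> {0..m}" "i \<in> {0..m}"
  shows "Measurable.pred (joint p q m) (\<lambda>\<omega>. fst \<omega> j = fst \<omega> i)"
  using pairX[where lt=Id, OF assms] by simp

lemma rankR_meas:
  fixes lt :: "('a::countable \<times> 'a) set"
  shows "Measurable.pred (joint p q m) (\<lambda>\<omega>. rankR lt m (fst \<omega>) (snd \<omega>) = r)"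
proof -
  have "(\<lambda>\<omega>. real (rankR lt m (fst \<omega>) (snd \<omega>))) \<in> borel_measurable (joint p q m)"
    unfolding rankR_def of_nat_sum
  proof (intro borel_measurable_sum)
    fix j assume j: "j \<in> {1..m}"
    then have j': "j \<in> {0..m}" and z: "(0::nat) \<in> {0..m}" by auto
    note [measurable] = pairX[OF j' z] eqX[OF j' z] compU[OF j'] compU[OF z]
    show "(\<lambda>\<omega>. real ((if (fst \<omega> j, fst \<omega> 0) \<in> lt then 1 else 0) +
           (if fst \<omega> j = fst \<omega> 0 \<and> snd \<omega> j < snd \<omega> 0 then 1 else 0))) \<in> borel_measurable (joint p q m)"
      unfolding of_nat_add
      by (intro borel_measurable_add borel_measurable_if measurable_If) (auto intro!: pred_intros_logic)
  qed
  then have "Measurable.pred (joint p q m) (\<lambda>\<omega>. real (rankR lt m (fst \<omega>) (snd \<omega>)) = real r)"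
    by (rule pred_eq_const1) simp
  then show ?thesis by simp
qed



lemma beta_nat:
  assumes "j \<le> e"
  shows "((\<lambda>t::real. real (e choose j) * (t ^ j * (1 - t) ^ (e - j))) has_integral 1 / real (e + 1)) {0<..<1}"
proof -
  have "((\<lambda>t::real. t powr (real (j+1) - 1) * (1 - t) powr (real (e-j+1) - 1)) has_integral Beta (real (j+1)) (real (e-j+1))) {0<..<1}"
    using has_integral_Beta_real[of "real (j+1)" "real (e-j+1)"] by (simp add: has_integral_Icc_iff_Ioo)
  then have "((\<lambda>t::real. t ^ j * (1 - t) ^ (e - j)) has_integral Beta (real (j+1)) (real (e-j+1))) {0<..<1}"
    by (rule has_integral_eq[rotated]) (auto simp: powr_realpow)
  moreover have "Beta (real (j+1)) (real (e-j+1)) = fact j * fact (e - j) / fact (e + 1)"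
  proof -
    have g1: "Gamma (real (j+1)) = fact j" using Gamma_fact[of j] by (simp add: add.commute)
    have g2: "Gamma (real (e-j+1)) = fact (e-j)" using Gamma_fact[of "e-j"] by (simp add: add.commute)
    have g3: "Gamma (real (j+1) + real (e-j+1)) = fact (e+1)"
      using Gamma_fact[of "e+1"] assms by (simp add: add.commute)
    show ?thesis unfolding Beta_altdef rGamma_inverse_Gamma g1 g2 g3 by (simp add: field_simps)
  qed
  ultimately have "((\<lambda>t::real. real (e choose j) * (t ^ j * (1 - t) ^ (e - j))) has_integral
      real (e choose j) * (fact j * fact (e - j) / fact (e + 1))) {0<..<1}"
    by (intro has_integral_mult_right) simp
  moreover have "real (e choose j) * (fact j * fact (e - j) / fact (e + 1)) = 1 / real (e + 1)"
    using assms by (simp add: binomial_fact field_simps) (smt (verit) fact_gt_zero of_nat_0_le_iff mult_nonneg_nonneg)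
  ultimately show ?thesis by simp
qed




lemma coeff_id:
  assumes "i \<le> r" "l \<le> m - r" "r \<le> m"
  shows "real (m choose r) * real (r choose i) * real ((m - r) choose l) =
         real (m choose (i + l)) * real ((m - (i + l)) choose (r - i)) * real ((i + l) choose i)"
proof -
  obtain a where a: "r = i + a" using assms(1) le_Suc_ex by blast
  obtain b where b: "m - r = l + b" using assms(2) le_Suc_ex by blast
  have m: "m = i + a + l + b" using a b assms(3) by linarith
  have e1: "m - (i + l) = a + b" using m by simp
  have e2: "r - i = a" using a by simp
  show ?thesis unfolding b e1 e2
    apply (subst (1 2 3 4 5 6) binomial_fact)
    using a b m by (simp_all)
qed

lemma binom_split:
  fixes A B C D :: real
  assumes "r \<le> m"
  shows "real (m choose r) * (A + B) ^ r * (C + D) ^ (m - r) =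
    (\<Sum>e=0..m. \<Sum>j=0..e. if j \<le> r then real (m choose e) * real ((m - e) choose (r - j)) * real (e choose j)
        * A ^ (r - j) * C ^ ((m - e) - (r - j)) * B ^ j * D ^ (e - j) else 0)"
  (is "_ = (\<Sum>e=0..m. \<Sum>j=0..e. ?F e j)")
proof -
  define T where "T = {..r} \<times> {..m-r}"
  define S where "S = Sigma {0..m} (\<lambda>e. {0..e})"
  define g where "g = (\<lambda>(i::nat, l::nat). (i + l, i))"
  have "real (m choose r) * (A + B) ^ r * (C + D) ^ (m - r) =
     real (m choose r) * ((\<Sum>i\<le>r. real (r choose i) * B ^ i * A ^ (r - i)) *
        (\<Sum>l\<le>m-r. real ((m-r) choose l) * D ^ l * C ^ (m - r - l)))"
  proof -
    have "(A + B) ^ r = (\<Sum>i\<le>r. real (r choose i) * B ^ i * A ^ (r - i))"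
      using binomial_ring[of B A r] by (simp add: add.commute)
    moreover have "(C + D) ^ (m - r) = (\<Sum>l\<le>m-r. real ((m-r) choose l) * D ^ l * C ^ (m - r - l))"
      using binomial_ring[of D C "m - r"] by (simp add: add.commute)
    ultimately show ?thesis by (simp add: mult.assoc)
  qed
  also have "\<dots> = (\<Sum>i\<le>r. \<Sum>l\<le>m-r. ?F (i + l) i)"
  proof -
    have *: "real (m choose r) * (real (r choose i) * B ^ i * A ^ (r - i) * (real ((m - r) choose l) * D ^ l * C ^ (m - r - l)))
          = ?F (i + l) i" if i: "i \<le> r" and l: "l \<le> m - r" for i l
    proof -
      have ex1: "m - (i + l) - (r - i) = m - r - l" using i l assms by auto
      have ex2: "i + l - i = l" by simp
      have co: "real (m choose r) * real (r choose i) * real ((m - r) choose l) =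
         real (m choose (i + l)) * real ((m - (i + l)) choose (r - i)) * real ((i + l) choose i)"
        using coeff_id[of i r l m] i l assms by simp
      have Fe: "?F (i + l) i = real (m choose (i + l)) * real ((m - (i + l)) choose (r - i)) * real ((i + l) choose i)
          * A ^ (r - i) * C ^ (m - r - l) * B ^ i * D ^ l"
        using i by (simp only: ex1 ex2 if_True)
      show ?thesis
        unfolding Fe co[symmetric] by (simp add: ac_simps)
    qed
    have "real (m choose r) * ((\<Sum>i\<le>r. real (r choose i) * B ^ i * A ^ (r - i)) *
        (\<Sum>l\<le>m-r. real ((m-r) choose l) * D ^ l * C ^ (m - r - l))) =
      (\<Sum>i\<le>r. \<Sum>l\<le>m-r. real (m choose r) * (real (r choose i) * B ^ i * A ^ (r - i) * (real ((m - r) choose l) * D ^ l * C ^ (m - r - l))))"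
      by (subst sum_product) (simp only: sum_distrib_left)
    also have "\<dots> = (\<Sum>i\<le>r. \<Sum>l\<le>m-r. ?F (i + l) i)"
      by (rule sum.cong[OF refl], rule sum.cong[OF refl], rule *) auto
    finally show ?thesis .
  qed
  also have "\<dots> = (\<Sum>(i,l)\<in>T. ?F (i + l) i)"
    unfolding T_def by (rule sum.cartesian_product)
  also have "\<dots> = (\<Sum>x\<in>g ` T. case x of (e, j) \<Rightarrow> ?F e j)"
    by (subst sum.reindex) (auto simp: inj_on_def g_def intro!: sum.cong)
  also have "\<dots> = (\<Sum>x\<in>S. case x of (e, j) \<Rightarrow> ?F e j)"
  proof (rule sum.mono_neutral_left)
    show "finite S" unfolding S_def by auto
    show "g ` T \<subseteq> S" unfolding g_def T_def S_def using assms by auto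
    show "\<forall>x\<in>S - g ` T. (case x of (e, j) \<Rightarrow> ?F e j) = 0"
    proof
      fix x assume x: "x \<in> S - g ` T"
      obtain e j where ej: "x = (e, j)" by fastforce
      have "?F e j = 0"
      proof (cases "j \<le> r")
        case True
        have "e - j > m - r"
        proof (rule ccontr)
          assume "\<not> e - j > m - r"
          then have "(j, e - j) \<in> T" using True unfolding T_def by auto
          moreover have "g (j, e - j) = (e, j)" using x ej unfolding g_def S_def by auto
          ultimately show False using x ej by force
        qed
        then have "(m - e) choose (r - j) = 0" using x ej True unfolding S_def by auto
        then show ?thesis by simp
      qed simp
      then show "(case x of (e, j) \<Rightarrow> ?F e j) = 0" using ej by simp
    qed
  qed
  also have "\<dots> = (\<Sum>e=0..m. \<Sum>j=0..e. ?F e j)"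
    unfolding S_def by (simp add: sum.Sigma)
  finally show ?thesis .
qed




lemma ptilde_measure: "ptilde lt p x = measure (measure_pmf p) {y. (y, x) \<in> lt}"
  unfolding ptilde_def measure_pmf_conv_infsetsum
  by (rule infsetsum_infsum[symmetric]) (rule pmf_abs_summable)

lemma ptilde_bounds:
  assumes irr: "(x, x) \<notin> lt"
  shows "0 \<le> ptilde lt p x" "ptilde lt p x + pmf p x \<le> 1"
proof -
  show "0 \<le> ptilde lt p x" unfolding ptilde_measure by simp
  have "ptilde lt p x + pmf p x = measure (measure_pmf p) ({y. (y, x) \<in> lt} \<union> {x})"
    unfolding ptilde_measure using irr
    by (subst measure_pmf.finite_measure_Union) (auto simp: measure_pmf_single)
  also have "\<dots> \<le> 1" by simp
  finally show "ptilde lt p x + pmf p x \<le> 1" .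
qed

lemma L3:
  fixes lt :: "('a \<times> 'a) set"
  assumes irr: "(x0, x0) \<notin> lt"
  shows "(\<integral>\<^sup>+y. ennreal (if j \<in> S then (if (y, x0) \<in> lt \<or> (y = x0 \<and> u < t) then 1 else 0)
                        else 1 - (if (y, x0) \<in> lt \<or> (y = x0 \<and> u < t) then 1 else 0)) \<partial>measure_pmf p)
       = ennreal (if j \<in> S then ptilde lt p x0 + (if u < t then pmf p x0 else 0)
                  else 1 - (ptilde lt p x0 + (if u < t then pmf p x0 else 0)))"
proof -
  define B where "B = {y. (y, x0) \<in> lt} \<union> (if u < t then {x0} else {})"
  have mB: "measure (measure_pmf p) B = ptilde lt p x0 + (if u < t then pmf p x0 else 0)"
  proof (cases "u < t")
    case True
    then have "B = {y. (y, x0) \<in> lt} \<union> {x0}" unfolding B_def by simp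
    then show ?thesis unfolding ptilde_measure using irr True
      by (simp only:) (subst measure_pmf.finite_measure_Union, auto simp: measure_pmf_single)
  qed (simp add: B_def ptilde_measure)
  have c: "(if (y, x0) \<in> lt \<or> (y = x0 \<and> u < t) then 1 else 0 :: real) = indicator B y" for y
    unfolding B_def by (auto simp: indicator_def)
  show ?thesis
  proof (cases "j \<in> S")
    case True
    have "(\<integral>\<^sup>+y. ennreal (indicator B y) \<partial>measure_pmf p) = emeasure (measure_pmf p) B"
      unfolding ennreal_indicator by (rule nn_integral_indicator) simp
    also have "\<dots> = ennreal (measure (measure_pmf p) B)" by (simp add: measure_pmf.emeasure_eq_measure)
    finally show ?thesis using True unfolding c mB by simp
  next
    case False
    have "(\<integral>\<^sup>+y. ennreal (1 - indicator B y) \<partial>measure_pmf p) = (\<integral>\<^sup>+y. indicator (UNIV - B) y \<partial>measure_pmf p)"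
      by (intro nn_integral_cong) (auto simp: indicator_def)
    also have "\<dots> = emeasure (measure_pmf p) (UNIV - B)"
      by (simp add: nn_integral_indicator)
    also have "\<dots> = ennreal (1 - measure (measure_pmf p) B)"
      using measure_pmf.prob_compl[of B p] by (simp add: measure_pmf.emeasure_eq_measure)
    finally show ?thesis using False unfolding c mB by simp
  qed
qed

abbreviation "U01 \<equiv> uniform_measure lborel {0<..<1::real}"

lemma U_affine:
  assumes "0 \<le> \<alpha>" "0 \<le> \<beta>" "X \<in> sets borel"
  shows "(\<integral>\<^sup>+u. ennreal (\<alpha> + \<beta> * indicator X u) \<partial>U01) = ennreal \<alpha> + ennreal \<beta> * emeasure U01 X"
proof -
  interpret prob_space U01 by (rule prob_space_uniform_measure) auto
  have "(\<integral>\<^sup>+u. ennreal (\<alpha> + \<beta> * indicator X u) \<partial>U01) = (\<integral>\<^sup>+u. ennreal \<alpha> + ennreal \<beta> * indicator X u \<partial>U01)"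
    using assms by (intro nn_integral_cong) (auto simp: indicator_def ennreal_plus)
  also have "\<dots> = ennreal \<alpha> + ennreal \<beta> * emeasure U01 X"
    using assms by (subst nn_integral_add) (auto simp: nn_integral_cmult_indicator emeasure_space_1)
  finally show ?thesis .
qed

lemma L4:
  assumes "0 \<le> a" "0 \<le> px" "a + px \<le> 1" "0 < t" "t < 1"
  shows "(\<integral>\<^sup>+u. ennreal (if j \<in> S then a + (if u < t then px else 0)
                  else 1 - (a + (if u < t then px else 0))) \<partial>U01)
       = ennreal (if j \<in> S then a + px * t else 1 - (a + px * t))"
proof (cases "j \<in> S")
  case True
  have "(\<integral>\<^sup>+u. ennreal (a + (if u < t then px else 0)) \<partial>U01) = (\<integral>\<^sup>+u. ennreal (a + px * indicator {..<t} u) \<partial>U01)"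
    by (intro nn_integral_cong) (auto simp: indicator_def)
  also have "\<dots> = ennreal a + ennreal px * emeasure U01 {..<t}"
    using assms by (intro U_affine) auto
  also have "emeasure U01 {..<t} = ennreal t"
  proof -
    have "{0<..<1} \<inter> {..<t} = {0<..<t}" using assms by auto
    then show ?thesis using assms by (simp add: divide_ennreal_def)
  qed
  finally show ?thesis using True assms by (simp add: ennreal_plus ennreal_mult)
next
  case False
  have "(\<integral>\<^sup>+u. ennreal (1 - (a + (if u < t then px else 0))) \<partial>U01) = (\<integral>\<^sup>+u. ennreal ((1 - a - px) + px * indicator {t..} u) \<partial>U01)"
    by (intro nn_integral_cong) (auto simp: indicator_def algebra_simps)
  also have "\<dots> = ennreal (1 - a - px) + ennreal px * emeasure U01 {t..}"
    using assms by (intro U_affine) auto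
  also have "emeasure U01 {t..} = ennreal (1 - t)"
  proof -
    have "{0<..<1} \<inter> {t..} = {t..<1}" using assms by auto
    then show ?thesis using assms by (simp add: divide_ennreal_def)
  qed
  also have "ennreal (1 - a - px) + ennreal px * ennreal (1 - t) = ennreal (1 - (a + px * t))"
  proof -
    have p1: "0 \<le> px * (1 - t)" using assms by simp
    have "ennreal px * ennreal (1 - t) = ennreal (px * (1 - t))" using assms by (simp add: ennreal_mult)
    also have "ennreal (1 - a - px) + \<dots> = ennreal ((1 - a - px) + px * (1 - t))"
      using assms p1 by (subst ennreal_plus) auto
    finally show ?thesis by (simp add: algebra_simps)
  qed
  finally show ?thesis using False by simp
qed




lemma ind_sum_subsets:
  fixes b :: "nat \<Rightarrow> nat"
  assumes fin: "finite A" and b1: "\<And>j. j \<in> A \<Longrightarrow> b j \<le> 1"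
  shows "(if (\<Sum>j\<in>A. b j) = r then 1 else 0 :: real) =
     (\<Sum>S\<in>{S. S \<subseteq> A \<and> card S = r}. \<Prod>j\<in>A. if j \<in> S then real (b j) else 1 - real (b j))"
proof -
  define S0 where "S0 = {j\<in>A. b j = 1}"
  have "(\<Sum>j\<in>A. b j) = (\<Sum>j\<in>A. if b j = 1 then 1 else 0)"
    using b1 by (intro sum.cong refl) (metis One_nat_def le_SucE le_zero_eq)
  also have "\<dots> = card S0"
    unfolding S0_def using fin by (simp add: sum.inter_filter[symmetric])
  finally have sb: "(\<Sum>j\<in>A. b j) = card S0" .
  have pr: "(\<Prod>j\<in>A. if j \<in> S then real (b j) else 1 - real (b j)) = (if S = S0 then 1 else 0)"
    if S: "S \<subseteq> A" for S
  proof (cases "S = S0")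
    case True
    have "(\<Prod>j\<in>A. if j \<in> S then real (b j) else 1 - real (b j)) = (\<Prod>j\<in>A. 1)"
    proof (intro prod.cong refl)
      fix j assume j: "j \<in> A"
      show "(if j \<in> S then real (b j) else 1 - real (b j)) = 1"
        using b1[OF j] j True unfolding S0_def by auto
    qed
    then show ?thesis using True by simp
  next
    case False
    then obtain j where j: "j \<in> A" "(j \<in> S) \<noteq> (j \<in> S0)" using S unfolding S0_def by blast
    have "(if j \<in> S then real (b j) else 1 - real (b j)) = 0"
      using j b1[OF j(1)] unfolding S0_def by auto
    then have "(\<Prod>j\<in>A. if j \<in> S then real (b j) else 1 - real (b j)) = 0"
      using fin j(1) by (intro prod_zero) blast+
    then show ?thesis using False by simp
  qed
  have "(\<Sum>S\<in>{S. S \<subseteq> A \<and> card S = r}. \<Prod>j\<in>A. if j \<in> S then real (b j) else 1 - real (b j))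
      = (\<Sum>S\<in>{S. S \<subseteq> A \<and> card S = r}. if S = S0 then 1 else 0)"
    using pr by (intro sum.cong refl) auto
  also have "\<dots> = (if S0 \<in> {S. S \<subseteq> A \<and> card S = r} then 1 else 0)"
    using fin by (simp add: sum.delta')
  also have "\<dots> = (if card S0 = r then 1 else 0)" unfolding S0_def by auto
  finally show ?thesis using sb by simp
qed

lemma sum_subsets_const:
  fixes s :: real
  assumes fin: "finite A"
  shows "(\<Sum>S\<in>{S. S \<subseteq> A \<and> card S = r}. \<Prod>j\<in>A. if j \<in> S then s else 1 - s) =
     real (card A choose r) * s ^ r * (1 - s) ^ (card A - r)"
proof -
  have "(\<Prod>j\<in>A. if j \<in> S then s else 1 - s) = s ^ r * (1 - s) ^ (card A - r)"
    if S: "S \<in> {S. S \<subseteq> A \<and> card S = r}" for S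
  proof -
    have "(\<Prod>j\<in>A. if j \<in> S then s else 1 - s) = (\<Prod>j\<in>A \<inter> {x. x \<in> S}. s) * (\<Prod>j\<in>A \<inter> - {x. x \<in> S}. 1 - s)"
      using fin by (rule prod.If_cases)
    also have "\<dots> = s ^ card S * (1 - s) ^ card (A - S)"
      using S by (simp add: Int_absorb1 Diff_eq[symmetric] Int_commute)
    also have "card (A - S) = card A - r" using S fin by (metis (mono_tags, lifting) card_Diff_subset finite_subset mem_Collect_eq)
    finally show ?thesis using S by simp
  qed
  then have "(\<Sum>S\<in>{S. S \<subseteq> A \<and> card S = r}. \<Prod>j\<in>A. if j \<in> S then s else 1 - s) =
     (\<Sum>S\<in>{S. S \<subseteq> A \<and> card S = r}. s ^ r * (1 - s) ^ (card A - r))"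
    by (rule sum.cong[OF refl])
  also have "\<dots> = real (card {S. S \<subseteq> A \<and> card S = r}) * (s ^ r * (1 - s) ^ (card A - r))"
    by simp
  also have "card {S. S \<subseteq> A \<and> card S = r} = card A choose r" using fin by (rule n_subsets)
  finally show ?thesis by simp
qed




lemma H_integral:
  fixes lt :: "('a \<times> 'a) set"
  assumes a0: "0 \<le> ptilde lt p x" and ab: "ptilde lt p x + pmf p x \<le> 1" and rm: "r \<le> m"
  shows "((\<lambda>t. real (m choose r) * (ptilde lt p x + pmf p x * t) ^ r * (1 - (ptilde lt p x + pmf p x * t)) ^ (m - r))
          has_integral H lt p x m r) {0<..<1}"
proof -
  define a where "a = ptilde lt p x"
  define b where "b = pmf p x"
  have b0: "0 \<le> b" unfolding b_def by simp
  consider "0 < b \<and> b < 1" | "b = 0" | "b = 1" using b0 ab a0 unfolding a_def b_def by fastforce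
  then show ?thesis
  proof cases
    case 1
    define \<rho> where "\<rho> = a / (1 - b)"
    have Hd: "H lt p x m r = (\<Sum>e=0..m.
          (\<Sum>j=0..e. (if j \<le> r then
               real ((m - e) choose (r - j)) * \<rho> ^ (r - j)
                 * (1 - \<rho>) ^ ((m - e) - (r - j)) * (1 / real (e + 1))
             else 0))
          * real (m choose e) * b ^ e * (1 - b) ^ (m - e))"
      using 1 unfolding H_def rho_def \<rho>_def a_def b_def by simp
    define K where "K = (\<lambda>e j. if j \<le> r then real (m choose e) * real ((m - e) choose (r - j))
        * ((1 - b) * \<rho>) ^ (r - j) * ((1 - b) * (1 - \<rho>)) ^ ((m - e) - (r - j)) * b ^ e else 0)"
    have A: "a = (1 - b) * \<rho>" unfolding \<rho>_def using 1 by simp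
    have C: "1 - a - b = (1 - b) * (1 - \<rho>)" unfolding \<rho>_def using 1 by (simp add: field_simps)
    have pt: "real (m choose r) * (a + b * t) ^ r * (1 - (a + b * t)) ^ (m - r) =
        (\<Sum>e=0..m. \<Sum>j=0..e. K e j * (real (e choose j) * (t ^ j * (1 - t) ^ (e - j))))" for t
    proof -
      have "real (m choose r) * (a + b * t) ^ r * (1 - (a + b * t)) ^ (m - r) =
          real (m choose r) * (a + b * t) ^ r * ((1 - a - b) + b * (1 - t)) ^ (m - r)"
        by (simp add: algebra_simps)
      also have "\<dots> = (\<Sum>e=0..m. \<Sum>j=0..e. if j \<le> r then real (m choose e) * real ((m - e) choose (r - j)) * real (e choose j)
        * a ^ (r - j) * (1 - a - b) ^ ((m - e) - (r - j)) * (b * t) ^ j * (b * (1 - t)) ^ (e - j) else 0)"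
        by (rule binom_split[OF rm])
      also have "\<dots> = (\<Sum>e=0..m. \<Sum>j=0..e. K e j * (real (e choose j) * (t ^ j * (1 - t) ^ (e - j))))"
      proof (intro sum.cong refl)
        fix e j assume e: "e \<in> {0..m}" and j: "j \<in> {0..e}"
        have bb: "(b * t) ^ j * (b * (1 - t)) ^ (e - j) = b ^ e * (t ^ j * (1 - t) ^ (e - j))"
          using j by (simp add: power_mult_distrib power_add[symmetric])
        show "(if j \<le> r then real (m choose e) * real ((m - e) choose (r - j)) * real (e choose j)
          * a ^ (r - j) * (1 - a - b) ^ ((m - e) - (r - j)) * (b * t) ^ j * (b * (1 - t)) ^ (e - j) else 0)
          = K e j * (real (e choose j) * (t ^ j * (1 - t) ^ (e - j)))"
          unfolding K_def A[symmetric] C[symmetric] using bb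
          by (simp add: mult_ac)
      qed
      finally show ?thesis .
    qed
    have int: "((\<lambda>t. \<Sum>e=0..m. \<Sum>j=0..e. K e j * (real (e choose j) * (t ^ j * (1 - t) ^ (e - j))))
        has_integral (\<Sum>e=0..m. \<Sum>j=0..e. K e j * (1 / real (e + 1)))) {0<..<1}"
      by (intro has_integral_sum has_integral_mult_right beta_nat finite_atLeastAtMost) auto
    have val: "(\<Sum>e=0..m. \<Sum>j=0..e. K e j * (1 / real (e + 1))) = H lt p x m r"
      unfolding Hd sum_distrib_right
    proof (intro sum.cong refl)
      fix e j assume e: "e \<in> {0..m}" and j: "j \<in> {0..e}"
      show "K e j * (1 / real (e + 1)) =
         (if j \<le> r then real ((m - e) choose (r - j)) * \<rho> ^ (r - j) * (1 - \<rho>) ^ (m - e - (r - j)) * (1 / real (e + 1)) else 0)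
          * real (m choose e) * b ^ e * (1 - b) ^ (m - e)"
      proof (cases "j \<le> r \<and> r - j \<le> m - e")
        case True
        then have "(1 - b) ^ (m - e) = (1 - b) ^ (r - j) * (1 - b) ^ (m - e - (r - j))"
          using True by (metis le_add_diff_inverse power_add)
        then show ?thesis unfolding K_def using True by (simp add: power_mult_distrib mult_ac)
      next
        case False
        then show ?thesis unfolding K_def by auto
      qed
    qed
    show ?thesis
      using int[unfolded val] by (rule has_integral_eq[rotated]) (simp add: pt[unfolded a_def b_def])
  next
    case 2
    have "H lt p x m r = real (m choose r) * a ^ r * (1 - a) ^ (m - r)"
      using 2 unfolding H_def a_def b_def by simp
    moreover have "((\<lambda>t::real. real (m choose r) * a ^ r * (1 - a) ^ (m - r)) has_integral
        real (m choose r) * a ^ r * (1 - a) ^ (m - r)) {0<..<1}"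
      using has_integral_const_real[of "real (m choose r) * a ^ r * (1 - a) ^ (m - r)" 0 1]
      by (simp add: has_integral_Icc_iff_Ioo)
    ultimately show ?thesis using 2 unfolding a_def b_def by simp
  next
    case 3
    have a: "a = 0" using 3 a0 ab unfolding a_def b_def by simp
    have "H lt p x m r = 1 / real (m + 1)"
      using 3 unfolding H_def a_def b_def by simp
    then show ?thesis using beta_nat[OF rm] 3 a unfolding a_def b_def by (simp add: mult.assoc)
  qed
qed




lemma step5:
  fixes lt :: "('a::countable \<times> 'a) set" and p q :: "'a pmf"
  assumes irr: "\<And>x. (x, x) \<notin> lt" and t: "0 < t" "t < 1" and rm: "r \<le> m"
  defines "MXf \<equiv> (\<lambda>j::nat. if j = 0 then measure_pmf q else measure_pmf p)"
  defines "A \<equiv> {\<omega> \<in> space (joint p q m). rankR lt m (fst \<omega>) (snd \<omega>) = r}"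
  shows "(\<integral>\<^sup>+us'. (\<integral>\<^sup>+xs'. indicator A (xs'(0 := x0), us'(0 := t)) \<partial>PiM {1..m} MXf) \<partial>PiM {1..m} (\<lambda>_. U01))
    = ennreal (real (m choose r) * (ptilde lt p x0 + pmf p x0 * t) ^ r * (1 - (ptilde lt p x0 + pmf p x0 * t)) ^ (m - r))"
proof -
  interpret X: product_sigma_finite MXf
    unfolding MXf_def by (rule product_sigma_finite.intro)
      (simp split: if_split add: prob_space_imp_sigma_finite measure_pmf.prob_space_axioms)
  interpret UU: product_sigma_finite "\<lambda>_::nat. U01"
    by (rule product_sigma_finite.intro, rule prob_space_imp_sigma_finite, rule prob_space_uniform_measure) simp_all
  define cc where "cc = (\<lambda>y u. if (y, x0) \<in> lt \<or> (y = x0 \<and> u < t) then 1 else 0 :: real)"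
  define hh where "hh = (\<lambda>(S::nat set) (j::nat) y u. if j \<in> S then cc y u else 1 - cc y u)"
  define ee where "ee = (\<lambda>u. ptilde lt p x0 + (if u < t then pmf p x0 else 0))"
  define kk where "kk = (\<lambda>(S::nat set) (j::nat) u. if j \<in> S then ee u else 1 - ee u)"
  define s where "s = ptilde lt p x0 + pmf p x0 * t"
  define SS where "SS = {S. S \<subseteq> {1..m} \<and> card S = r}"
  have finSS: "finite SS" unfolding SS_def by simp
  have pb: "0 \<le> ptilde lt p x0" "ptilde lt p x0 + pmf p x0 \<le> 1" using ptilde_bounds[OF irr] by auto
  have s01: "0 \<le> s" "s \<le> 1"
  proof -
    have "pmf p x0 * t \<le> pmf p x0" using t by (simp add: mult_left_le)
    then show "0 \<le> s" "s \<le> 1" unfolding s_def using pb t by auto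
  qed
  have hh01: "0 \<le> hh S j y u" for S j y u unfolding hh_def cc_def by auto
  have
    pw: "indicator A (xs'(0 := x0), us'(0 := t)) = (\<Sum>S\<in>SS. \<Prod>j\<in>{1..m}. ennreal (hh S j (xs' j) (us' j)))"
    if xs': "xs' \<in> space (PiM {1..m} MXf)" and us': "us' \<in> space (PiM {1..m} (\<lambda>_. U01))" for xs' us'
  proof -
    have inJ: "(xs'(0 := x0), us'(0 := t)) \<in> space (joint p q m)"
      using xs' us' unfolding joint_def space_pair_measure space_PiM MXf_def
      by (auto simp: PiE_iff extensional_def)
    define bb where "bb = (\<lambda>j. if (xs' j, x0) \<in> lt \<or> (xs' j = x0 \<and> us' j < t) then 1 else 0 :: nat)"
    have rk: "rankR lt m (xs'(0 := x0)) (us'(0 := t)) = (\<Sum>j\<in>{1..m}. bb j)"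
      unfolding rankR_def bb_def using irr by (intro sum.cong refl) auto
    have "(if (\<Sum>j\<in>{1..m}. bb j) = r then 1 else 0 :: real) =
       (\<Sum>S\<in>SS. \<Prod>j\<in>{1..m}. if j \<in> S then real (bb j) else 1 - real (bb j))"
      unfolding SS_def by (rule ind_sum_subsets) (auto simp: bb_def)
    also have "\<dots> = (\<Sum>S\<in>SS. \<Prod>j\<in>{1..m}. hh S j (xs' j) (us' j))"
      unfolding hh_def cc_def bb_def by (intro sum.cong prod.cong refl) auto
    finally have "indicator A (xs'(0 := x0), us'(0 := t)) = ennreal (\<Sum>S\<in>SS. \<Prod>j\<in>{1..m}. hh S j (xs' j) (us' j))"
      using inJ rk unfolding A_def by (auto simp: indicator_def)
    also have "\<dots> = (\<Sum>S\<in>SS. ennreal (\<Prod>j\<in>{1..m}. hh S j (xs' j) (us' j)))"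
      by (rule sum_ennreal[symmetric]) (simp add: prod_nonneg hh01)
    also have "\<dots> = (\<Sum>S\<in>SS. \<Prod>j\<in>{1..m}. ennreal (hh S j (xs' j) (us' j)))"
      by (intro sum.cong refl prod_ennreal[symmetric]) (simp add: hh01)
    finally show ?thesis .
  qed
  have inner: "(\<integral>\<^sup>+xs'. indicator A (xs'(0 := x0), us'(0 := t)) \<partial>PiM {1..m} MXf)
      = (\<Sum>S\<in>SS. \<Prod>j\<in>{1..m}. ennreal (kk S j (us' j)))"
    if us': "us' \<in> space (PiM {1..m} (\<lambda>_. U01))" for us'
  proof -
    have "(\<integral>\<^sup>+xs'. indicator A (xs'(0 := x0), us'(0 := t)) \<partial>PiM {1..m} MXf)
       = (\<integral>\<^sup>+xs'. (\<Sum>S\<in>SS. \<Prod>j\<in>{1..m}. ennreal (hh S j (xs' j) (us' j))) \<partial>PiM {1..m} MXf)"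
      using pw us' by (intro nn_integral_cong) auto
    also have "\<dots> = (\<Sum>S\<in>SS. \<integral>\<^sup>+xs'. (\<Prod>j\<in>{1..m}. ennreal (hh S j (xs' j) (us' j))) \<partial>PiM {1..m} MXf)"
    proof (rule nn_integral_sum)
      fix S
      show "(\<lambda>xs'. \<Prod>j\<in>{1..m}. ennreal (hh S j (xs' j) (us' j))) \<in> borel_measurable (PiM {1..m} MXf)"
      proof (intro borel_measurable_prod_ennreal)
        fix j assume j: "j \<in> {1..m}"
        have "(\<lambda>xs'. xs' j) \<in> measurable (PiM {1..m} MXf) (MXf j)"
          using j by (intro measurable_component_singleton)
        then have "(\<lambda>xs'. xs' j) \<in> measurable (PiM {1..m} MXf) (count_space UNIV)"
          using j by (simp add: MXf_def)
        then show "(\<lambda>xs'. ennreal (hh S j (xs' j) (us' j))) \<in> borel_measurable (PiM {1..m} MXf)"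
          by (rule measurable_compose) simp
      qed
    qed
    also have "\<dots> = (\<Sum>S\<in>SS. \<Prod>j\<in>{1..m}. \<integral>\<^sup>+y. ennreal (hh S j y (us' j)) \<partial>MXf j)"
      by (intro sum.cong refl X.product_nn_integral_prod) (auto simp: MXf_def)
    also have "\<dots> = (\<Sum>S\<in>SS. \<Prod>j\<in>{1..m}. ennreal (kk S j (us' j)))"
    proof (intro sum.cong prod.cong refl)
      fix S j assume j: "j \<in> {1..m}"
      then have "MXf j = measure_pmf p" unfolding MXf_def by simp
      then show "(\<integral>\<^sup>+y. ennreal (hh S j y (us' j)) \<partial>MXf j) = ennreal (kk S j (us' j))"
        unfolding hh_def cc_def kk_def ee_def using L3[OF irr[of x0], where j=j and S=S and u="us' j" and t=t and p=p] by simp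
    qed
    finally show ?thesis .
  qed
  have "(\<integral>\<^sup>+us'. (\<integral>\<^sup>+xs'. indicator A (xs'(0 := x0), us'(0 := t)) \<partial>PiM {1..m} MXf) \<partial>PiM {1..m} (\<lambda>_. U01))
     = (\<integral>\<^sup>+us'. (\<Sum>S\<in>SS. \<Prod>j\<in>{1..m}. ennreal (kk S j (us' j))) \<partial>PiM {1..m} (\<lambda>_. U01))"
    using inner by (intro nn_integral_cong) auto
  also have "\<dots> = (\<Sum>S\<in>SS. \<integral>\<^sup>+us'. (\<Prod>j\<in>{1..m}. ennreal (kk S j (us' j))) \<partial>PiM {1..m} (\<lambda>_. U01))"
  proof (rule nn_integral_sum)
    fix S
    show "(\<lambda>us'. \<Prod>j\<in>{1..m}. ennreal (kk S j (us' j))) \<in> borel_measurable (PiM {1..m} (\<lambda>_. U01))"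
    proof (intro borel_measurable_prod_ennreal)
      fix j assume j: "j \<in> {1..m}"
      have "(\<lambda>us'. us' j) \<in> measurable (PiM {1..m} (\<lambda>_. U01)) U01"
        using j by (intro measurable_component_singleton)
      then have "(\<lambda>us'. us' j) \<in> borel_measurable (PiM {1..m} (\<lambda>_. U01))"
        by (simp cong: measurable_cong_sets)
      then show "(\<lambda>us'. ennreal (kk S j (us' j))) \<in> borel_measurable (PiM {1..m} (\<lambda>_. U01))"
        unfolding kk_def ee_def by measurable
    qed
  qed
  also have "\<dots> = (\<Sum>S\<in>SS. \<Prod>j\<in>{1..m}. \<integral>\<^sup>+u. ennreal (kk S j u) \<partial>U01)"
  proof -
    have kkm: "(\<lambda>u. ennreal (kk S j u)) \<in> borel_measurable U01" for S j
    proof -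
      have "(\<lambda>u. ennreal (kk S j u)) \<in> borel_measurable borel" unfolding kk_def ee_def by measurable
      then show ?thesis by (simp cong: measurable_cong_sets)
    qed
    show ?thesis by (intro sum.cong refl UU.product_nn_integral_prod) (auto simp: kkm)
  qed
  also have "\<dots> = (\<Sum>S\<in>SS. \<Prod>j\<in>{1..m}. ennreal (if j \<in> S then s else 1 - s))"
  proof (intro sum.cong prod.cong refl)
    fix S j
    show "(\<integral>\<^sup>+u. ennreal (kk S j u) \<partial>U01) = ennreal (if j \<in> S then s else 1 - s)"
      unfolding kk_def ee_def s_def using L4[OF pb(1) pmf_nonneg pb(2) t, where j=j and S=S] by simp
  qed
  also have "\<dots> = ennreal (\<Sum>S\<in>SS. \<Prod>j\<in>{1..m}. if j \<in> S then s else 1 - s)"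
  proof -
    have "(\<Sum>S\<in>SS. \<Prod>j\<in>{1..m}. ennreal (if j \<in> S then s else 1 - s)) =
        (\<Sum>S\<in>SS. ennreal (\<Prod>j\<in>{1..m}. if j \<in> S then s else 1 - s))"
      using s01 by (intro sum.cong refl prod_ennreal) auto
    also have "\<dots> = ennreal (\<Sum>S\<in>SS. \<Prod>j\<in>{1..m}. if j \<in> S then s else 1 - s)"
      using s01 by (intro sum_ennreal prod_nonneg) auto
    finally show ?thesis .
  qed
  also have "(\<Sum>S\<in>SS. \<Prod>j\<in>{1..m}. if j \<in> S then s else 1 - s) = real (m choose r) * s ^ r * (1 - s) ^ (m - r)"
    unfolding SS_def using sum_subsets_const[where A="{1..m}" and r=r and s=s] by simp
  finally show ?thesis unfolding s_def .
qed




theorem theorem3p8: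
  fixes lt :: "('a::countable \<times> 'a) set" and p q :: "'a pmf" and m r :: nat
  assumes "strict_linear_order_on UNIV lt"
    and "0 < m"
    and "r \<le> m"
  shows "measure (joint p q m)
           {\<omega> \<in> space (joint p q m). rankR lt m (fst \<omega>) (snd \<omega>) = r}
         = (\<Sum>\<^sub>\<infinity>x. H lt p x m r * pmf q x)"
proof -
  have irr: "\<And>x. (x, x) \<notin> lt" using assms(1) by (auto simp: strict_linear_order_on_def irrefl_on_def)
  define MXf where "MXf = (\<lambda>j::nat. if j = 0 then measure_pmf q else measure_pmf p)"
  define J where "J = joint p q m"
  define A where "A = {\<omega> \<in> space (joint p q m). rankR lt m (fst \<omega>) (snd \<omega>) = r}"
  define MX where "MX = PiM (insert 0 {1..m}) MXf"
  define MU where "MU = PiM (insert 0 {1..m}) (\<lambda>_::nat. U01)"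
  define MX' where "MX' = PiM {1..m} MXf"
  define MU' where "MU' = PiM {1..m} (\<lambda>_::nat. U01)"
  define P where "P = (\<lambda>x0 t. real (m choose r) * (ptilde lt p x0 + pmf p x0 * t) ^ r * (1 - (ptilde lt p x0 + pmf p x0 * t)) ^ (m - r))"
  interpret X: product_sigma_finite MXf
    unfolding MXf_def by (rule product_sigma_finite.intro)
      (simp split: if_split add: prob_space_imp_sigma_finite measure_pmf.prob_space_axioms)
  interpret UU: product_sigma_finite "\<lambda>_::nat. U01"
    by (rule product_sigma_finite.intro, rule prob_space_imp_sigma_finite, rule prob_space_uniform_measure) simp_all
  have pU: "prob_space U01" by (rule prob_space_uniform_measure) simp_all
  have pMXf: "prob_space (MXf i)" for i unfolding MXf_def by (simp split: if_split add: measure_pmf.prob_space_axioms)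
  have pMX: "prob_space MX" "prob_space MX'" unfolding MX_def MX'_def by (simp_all add: prob_space_PiM pMXf)
  have pMU: "prob_space MU" "prob_space MU'" unfolding MU_def MU'_def by (simp_all add: prob_space_PiM pU)
  interpret sfMU: sigma_finite_measure MU by (rule prob_space_imp_sigma_finite) (rule pMU(1))
  interpret sfMX': sigma_finite_measure MX' by (rule prob_space_imp_sigma_finite) (rule pMX(2))
  interpret PP: pair_prob_space MX MU
    by (intro pair_prob_space.intro pair_sigma_finite.intro prob_space_imp_sigma_finite pMX pMU)
  interpret PXU: pair_sigma_finite MX' MU
    by (intro pair_sigma_finite.intro prob_space_imp_sigma_finite pMX pMU)
  have split0: "{0..m} = insert 0 {1..m}" by auto
  have JJ: "J = MX \<Otimes>\<^sub>M MU" unfolding J_def joint_def MX_def MU_def MXf_def split0 ..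
  have Ameas: "A \<in> sets J" unfolding A_def J_def by (rule predE) (rule rankR_meas)
  have indm: "indicator A \<in> borel_measurable (MX \<Otimes>\<^sub>M MU)" using Ameas unfolding JJ by simp
  have upd1: "(\<lambda>\<omega>. ((fst \<omega>)(0 := x0), snd \<omega>)) \<in> measurable (MX' \<Otimes>\<^sub>M MU) (MX \<Otimes>\<^sub>M MU)" for x0
  proof (rule measurable_Pair)
    show "(\<lambda>\<omega>. (fst \<omega>)(0 := x0)) \<in> measurable (MX' \<Otimes>\<^sub>M MU) MX"
      unfolding MX_def MX'_def
      by (rule measurable_fun_upd[where J="{1..m}"]) (auto simp: MXf_def)
  qed simp
  have upd2: "(\<lambda>\<omega>. ((snd \<omega>)(0 := x0), fst \<omega>)) \<in> measurable (MU \<Otimes>\<^sub>M MX') (MX \<Otimes>\<^sub>M MU)" for x0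
  proof (rule measurable_Pair)
    show "(\<lambda>\<omega>. (snd \<omega>)(0 := x0)) \<in> measurable (MU \<Otimes>\<^sub>M MX') MX"
      unfolding MX_def MX'_def
      by (rule measurable_fun_upd[where J="{1..m}"]) (auto simp: MXf_def)
  qed simp
  have m1: "(\<lambda>(xs', us). indicator A (xs'(0 := x0), us) :: ennreal) \<in> borel_measurable (MX' \<Otimes>\<^sub>M MU)" for x0
    using measurable_compose[OF upd1 indm] by (simp add: split_beta')
  have m2: "(\<lambda>(us, xs'). indicator A (xs'(0 := x0), us) :: ennreal) \<in> borel_measurable (MU \<Otimes>\<^sub>M MX')" for x0
    using measurable_compose[OF upd2 indm] by (simp add: split_beta')
  have "emeasure J A = (\<integral>\<^sup>+\<omega>. indicator A \<omega> \<partial>(MX \<Otimes>\<^sub>M MU))"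
    using Ameas by (simp add: JJ)
  also have "\<dots> = (\<integral>\<^sup>+xs. (\<integral>\<^sup>+us. indicator A (xs, us) \<partial>MU) \<partial>MX)"
    by (rule sfMU.nn_integral_fst[OF indm, symmetric])
  also have "\<dots> = (\<integral>\<^sup>+x0. (\<integral>\<^sup>+xs'. (\<integral>\<^sup>+us. indicator A (xs'(0 := x0), us) \<partial>MU) \<partial>MX') \<partial>measure_pmf q)"
  proof -
    have mG: "(\<lambda>xs. \<integral>\<^sup>+us. indicator A (xs, us) \<partial>MU) \<in> borel_measurable (PiM (insert 0 {1..m}) MXf)"
      using sfMU.borel_measurable_nn_integral_fst[OF indm] unfolding MX_def .
    have "(\<integral>\<^sup>+xs. (\<integral>\<^sup>+us. indicator A (xs, us) \<partial>MU) \<partial>PiM (insert 0 {1..m}) MXf) =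
       (\<integral>\<^sup>+x0. (\<integral>\<^sup>+xs'. (\<integral>\<^sup>+us. indicator A (xs'(0 := x0), us) \<partial>MU) \<partial>PiM {1..m} MXf) \<partial>MXf 0)"
      by (rule X.product_nn_integral_insert_rev[OF _ _ mG]) auto
    then show ?thesis unfolding MX_def MX'_def by (simp add: MXf_def)
  qed
  also have "\<dots> = (\<integral>\<^sup>+x0. (\<integral>\<^sup>+us. (\<integral>\<^sup>+xs'. indicator A (xs'(0 := x0), us) \<partial>MX') \<partial>MU) \<partial>measure_pmf q)"
    by (intro nn_integral_cong PXU.Fubini'[symmetric] m1)
  also have "\<dots> = (\<integral>\<^sup>+x0. (\<integral>\<^sup>+t. (\<integral>\<^sup>+us'. (\<integral>\<^sup>+xs'. indicator A (xs'(0 := x0), us'(0 := t)) \<partial>MX') \<partial>MU') \<partial>U01) \<partial>measure_pmf q)"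
  proof (intro nn_integral_cong)
    fix x0
    show "(\<integral>\<^sup>+us. (\<integral>\<^sup>+xs'. indicator A (xs'(0 := x0), us) \<partial>MX') \<partial>MU) =
      (\<integral>\<^sup>+t. (\<integral>\<^sup>+us'. (\<integral>\<^sup>+xs'. indicator A (xs'(0 := x0), us'(0 := t)) \<partial>MX') \<partial>MU') \<partial>U01)"
    proof -
      have mK: "(\<lambda>us. \<integral>\<^sup>+xs'. indicator A (xs'(0 := x0), us) \<partial>MX') \<in> borel_measurable (PiM (insert 0 {1..m}) (\<lambda>_. U01))"
        using sfMX'.borel_measurable_nn_integral[OF m2] unfolding MU_def .
      show ?thesis unfolding MU_def MU'_def
        by (rule UU.product_nn_integral_insert_rev[OF _ _ mK]) auto
    qed
  qed
  also have "\<dots> = (\<integral>\<^sup>+x0. (\<integral>\<^sup>+t. ennreal (P x0 t) \<partial>U01) \<partial>measure_pmf q)"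
  proof (rule nn_integral_cong, rule nn_integral_cong_AE)
    fix x0
    show "AE t in U01. (\<integral>\<^sup>+us'. (\<integral>\<^sup>+xs'. indicator A (xs'(0 := x0), us'(0 := t)) \<partial>MX') \<partial>MU') = ennreal (P x0 t)"
    proof (rule AE_uniform_measureI)
      show "AE t in lborel. t \<in> {0<..<1} \<longrightarrow>
          (\<integral>\<^sup>+us'. (\<integral>\<^sup>+xs'. indicator A (xs'(0 := x0), us'(0 := t)) \<partial>MX') \<partial>MU') = ennreal (P x0 t)"
        unfolding MX'_def MU'_def A_def MXf_def P_def
        by (intro AE_I2 impI, rule step5[OF irr _ _ assms(3)]) auto
    qed simp
  qed
  also have "\<dots> = (\<integral>\<^sup>+x0. ennreal (H lt p x0 m r) \<partial>measure_pmf q)"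
  proof (intro nn_integral_cong)
    fix x0
    have pb: "0 \<le> ptilde lt p x0" "ptilde lt p x0 + pmf p x0 \<le> 1" using ptilde_bounds[OF irr] by auto
    have Pnn: "0 \<le> P x0 t" if "t \<in> {0<..<1}" for t
    proof -
      have "pmf p x0 * t \<le> pmf p x0" using that by (simp add: mult_left_le)
      then show ?thesis unfolding P_def using pb that by auto
    qed
    have "(\<integral>\<^sup>+t. ennreal (P x0 t) \<partial>U01) = (\<integral>\<^sup>+t. ennreal (P x0 t) * indicator {0<..<1} t \<partial>lborel) / emeasure lborel {0<..<1::real}"
      by (rule nn_integral_uniform_measure) (auto simp: P_def)
    also have "(\<integral>\<^sup>+t. ennreal (P x0 t) * indicator {0<..<1} t \<partial>lborel) = ennreal (H lt p x0 m r)"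
      using Pnn H_integral[OF pb assms(3)] unfolding P_def by (rule nn_integral_has_integral_lebesgue')
    finally show "(\<integral>\<^sup>+t. ennreal (P x0 t) \<partial>U01) = ennreal (H lt p x0 m r)"
      by (simp add: divide_ennreal_def)
  qed
  finally have E: "emeasure J A = (\<integral>\<^sup>+x0. ennreal (H lt p x0 m r) \<partial>measure_pmf q)" .
  have Hnn: "0 \<le> H lt p x m r" for x
  proof -
    have pb: "0 \<le> ptilde lt p x" "ptilde lt p x + pmf p x \<le> 1" using ptilde_bounds[OF irr] by auto
    show ?thesis
    proof (rule has_integral_nonneg[OF H_integral[OF pb assms(3)]])
      fix t :: real assume t: "t \<in> {0<..<1}"
      have "pmf p x * t \<le> pmf p x" using t by (simp add: mult_left_le)
      then show "0 \<le> real (m choose r) * (ptilde lt p x + pmf p x * t) ^ r * (1 - (ptilde lt p x + pmf p x * t)) ^ (m - r)"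
        using pb t by auto
    qed
  qed
  have E2: "(\<integral>\<^sup>+x0. ennreal (H lt p x0 m r) \<partial>measure_pmf q) = (\<integral>\<^sup>+x. ennreal (H lt p x m r * pmf q x) \<partial>count_space UNIV)"
    unfolding nn_integral_measure_pmf using Hnn
    by (intro nn_integral_cong) (simp add: ennreal_mult mult.commute)
  have JA: "emeasure J A = ennreal (measure J A)"
    unfolding JJ by (rule PP.emeasure_eq_measure)
  have summ0: "integrable (count_space UNIV) (\<lambda>x. H lt p x m r * pmf q x)"
    by (rule integrableI_nn_integral_finite[where x="measure J A"]) (use E E2 JA Hnn in auto)
  note summ = summ0[folded Infinite_Set_Sum.abs_summable_on_def]
  have "ennreal (measure J A) = ennreal (infsetsum (\<lambda>x. H lt p x m r * pmf q x) UNIV)"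
    using E E2 JA nn_integral_conv_infsetsum[OF summ] Hnn by simp
  then have "measure J A = infsetsum (\<lambda>x. H lt p x m r * pmf q x) UNIV"
    using Hnn by (subst (asm) ennreal_inj) (auto intro!: infsetsum_nonneg)
  also have "\<dots> = (\<Sum>\<^sub>\<infinity>x. H lt p x m r * pmf q x)"
    using summ by (rule infsetsum_infsum)
  finally show ?thesis unfolding J_def A_def .
qed


end
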